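(* Let $G_0$ be the group of homeomorphisms of $\mathbb{R}$ generated by $a,b,c$ as in the context. The assignment $a\mapsto(1,0,0)$, $b\mapsto(0,1,0)$, $c\mapsto(0,0,1)$ extends to a surjective homomorphism $\pi:G_0\to\mathbb{Z}^3$ whose kernel is exactly the commutator subgroup $G_0'=[G_0,G_0]$.
   Context: The three generating homeomorphisms of $\mathbb{R}$ are as follows. - $a(t)=t+1$. - $b(t)=t$ for $t\le 0$, $b(t)=t/(1-t)$ for $0\le t\le 1/2$, $b(t)=(3t-1)/t$ for $1/2\le t\le 1$, $b(t)=t+1$ for $t\ge 1$. - $c(t)=2t/(t+1)$ for $0\le t\le 1$, and $c(t)=t$ otherwise. (In binary-sequence notation these are the maps $x$, $x_{\mathtt1}$, $y_{\mathtt{10}}$.) *)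

theory Defs
  imports Complex_Main "HOL-Algebra.Algebra"
begin

definition gen_a :: "real \<Rightarrow> real" where
  "gen_a t = t + 1"

definition gen_b :: "real \<Rightarrow> real" where
  "gen_b t = (if t \<le> 0 then t
              else if t \<le> 1/2 then t / (1 - t)
              else if t \<le> 1 then (3*t - 1) / t
              else t + 1)"

definition gen_c :: "real \<Rightarrow> real" where
  "gen_c t = (if 0 \<le> t \<and> t \<le> 1 then 2*t / (t + 1) else t)"

abbreviation SymR :: "(real \<Rightarrow> real) monoid" where
  "SymR \<equiv> BijGroup (UNIV :: real set)"

definition G0 :: "(real \<Rightarrow> real) monoid" where
  "G0 = SymR\<lparr>carrier := generate SymR {gen_a, gen_b, gen_c}\<rparr>"

definition Z3 :: "(int \<times> int \<times> int) monoid" where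
  "Z3 = integer_group \<times>\<times> integer_group \<times>\<times> integer_group"

end

theory Submission
  imports Defs
begin


definition Dr :: "(real\<Rightarrow>real) \<Rightarrow> real \<Rightarrow> real" where
  "Dr f x = (THE D. (f has_real_derivative D) (at x within {x..}))"
definition Dl :: "(real\<Rightarrow>real) \<Rightarrow> real \<Rightarrow> real" where
  "Dl f x = (THE D. (f has_real_derivative D) (at x within {..x}))"

lemma at_Ici_nonbot: "at (x::real) within {x..} \<noteq> bot"
  using at_within_Ici_at_right[of x] trivial_limit_at_right_real[of x] by (simp add: trivial_limit_def)
lemma at_Iic_nonbot: "at (x::real) within {..x} \<noteq> bot"
  using at_within_Iic_at_left[of x] trivial_limit_at_left_real[of x] by (simp add: trivial_limit_def)

lemma Dr_eq: "(f has_real_derivative D) (at x within {x..}) \<Longrightarrow> Dr f x = D"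
  unfolding Dr_def using has_field_derivative_unique[OF _ _ at_Ici_nonbot] by blast
lemma Dl_eq: "(f has_real_derivative D) (at x within {..x}) \<Longrightarrow> Dl f x = D"
  unfolding Dl_def using has_field_derivative_unique[OF _ _ at_Iic_nonbot] by blast

lemma right_piece:
  assumes "(F has_real_derivative D) (at x)" "0 < e" "\<And>y. x \<le> y \<Longrightarrow> y < x + e \<Longrightarrow> f y = F y"
  shows "(f has_real_derivative D) (at x within {x..})"
proof (rule has_field_derivative_transform_within[where f=F and d=e])
  show "(F has_real_derivative D) (at x within {x..})" using assms(1) by (rule has_field_derivative_at_within)
qed (use assms in \<open>auto simp: dist_real_def\<close>)

lemma left_piece:
  assumes "(F has_real_derivative D) (at x)" "0 < e" "\<And>y. x - e < y \<Longrightarrow> y \<le> x \<Longrightarrow> f y = F y"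
  shows "(f has_real_derivative D) (at x within {..x})"
proof (rule has_field_derivative_transform_within[where f=F and d=e])
  show "(F has_real_derivative D) (at x within {..x})" using assms(1) by (rule has_field_derivative_at_within)
qed (use assms in \<open>auto simp: dist_real_def\<close>)



definition Tp :: "(real\<Rightarrow>real) \<Rightarrow> real" where
  "Tp f = (THE m. \<forall>\<^sub>F x in at_top. f x = x + m)"
definition Tm :: "(real\<Rightarrow>real) \<Rightarrow> real" where
  "Tm f = (THE m. \<forall>\<^sub>F x in at_bot. f x = x + m)"
definition Bk :: "(real\<Rightarrow>real) \<Rightarrow> real set" where
  "Bk f = {x. Dr f x \<noteq> Dl f x}"
definition J :: "(real\<Rightarrow>real) \<Rightarrow> real" where
  "J f = (\<Sum>x\<in>Bk f. ln (Dr f x) - ln (Dl f x))"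

definition P :: "(real\<Rightarrow>real) \<Rightarrow> bool" where
  "P f \<longleftrightarrow> mono f \<and> inj f \<and> surj f
     \<and> (\<forall>x. \<exists>D>0. (f has_real_derivative D) (at x within {x..}))
     \<and> (\<forall>x. \<exists>D>0. (f has_real_derivative D) (at x within {..x}))
     \<and> finite (Bk f)
     \<and> (\<exists>m. \<forall>\<^sub>F x in at_top. f x = x + m)
     \<and> (\<exists>m. \<forall>\<^sub>F x in at_bot. f x = x + m)"

lemma Tp_eq: assumes "\<forall>\<^sub>F x in at_top. f x = x + m" shows "Tp f = m"
proof -
  have "m' = m" if "\<forall>\<^sub>F x in at_top. f x = x + m'" for m'
  proof -
    have "\<forall>\<^sub>F x in at_top. f x = x + m' \<and> f x = x + m" using that assms by (rule eventually_conj)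
    then obtain N where "\<And>x. x \<ge> N \<Longrightarrow> f x = x + m' \<and> f x = x + m"
      by (auto simp: eventually_at_top_linorder)
    from this[of N] show ?thesis by simp
  qed
  note uniq = this
  show ?thesis unfolding Tp_def
  proof (rule the_equality)
    show "\<forall>\<^sub>F x in at_top. f x = x + m" by (rule assms)
  qed (rule uniq)
qed

lemma Tm_eq: assumes "\<forall>\<^sub>F x in at_bot. f x = x + m" shows "Tm f = m"
proof -
  have "m' = m" if "\<forall>\<^sub>F x in at_bot. f x = x + m'" for m'
  proof -
    have "\<forall>\<^sub>F x in at_bot. f x = x + m' \<and> f x = x + m" using that assms by (rule eventually_conj)
    then obtain N where "\<And>x. x \<le> N \<Longrightarrow> f x = x + m' \<and> f x = x + m"
      by (auto simp: eventually_at_bot_linorder)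
    from this[of N] show ?thesis by simp
  qed
  note uniq = this
  show ?thesis unfolding Tm_def
  proof (rule the_equality)
    show "\<forall>\<^sub>F x in at_bot. f x = x + m" by (rule assms)
  qed (rule uniq)
qed

lemma J_superset:
  assumes "finite S" "Bk f \<subseteq> S"
  shows "J f = (\<Sum>x\<in>S. ln (Dr f x) - ln (Dl f x))"
  unfolding J_def
  by (rule sum.mono_neutral_left[OF assms(1,2)]) (auto simp: Bk_def)

lemma P_Dr: assumes "P f" shows "(f has_real_derivative Dr f x) (at x within {x..})" "Dr f x > 0"
proof -
  obtain D where "D > 0" "(f has_real_derivative D) (at x within {x..})" using assms unfolding P_def by (elim conjE) blast
  then show "(f has_real_derivative Dr f x) (at x within {x..})" "Dr f x > 0" using Dr_eq by auto
qed

lemma P_Dl: assumes "P f" shows "(f has_real_derivative Dl f x) (at x within {..x})" "Dl f x > 0"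
proof -
  obtain D where "D > 0" "(f has_real_derivative D) (at x within {..x})" using assms unfolding P_def by (elim conjE) blast
  then show "(f has_real_derivative Dl f x) (at x within {..x})" "Dl f x > 0" using Dl_eq by auto
qed

lemma comp_Dr: assumes "P f" "P g"
  shows "((\<lambda>x. f (g x)) has_real_derivative Dr f (g x) * Dr g x) (at x within {x..})"
proof -
  have m: "mono g" using assms(2) by (simp add: P_def)
  have "(f has_real_derivative Dr f (g x)) (at (g x) within (g ` {x..}))"
    by (rule has_field_derivative_subset[OF P_Dr(1)[OF assms(1)]]) (auto intro: monoD[OF m])
  from DERIV_image_chain[OF this P_Dr(1)[OF assms(2)]] show ?thesis by (simp add: o_def)
qed

lemma comp_Dl: assumes "P f" "P g"
  shows "((\<lambda>x. f (g x)) has_real_derivative Dl f (g x) * Dl g x) (at x within {..x})"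
proof -
  have m: "mono g" using assms(2) by (simp add: P_def)
  have "(f has_real_derivative Dl f (g x)) (at (g x) within (g ` {..x}))"
    by (rule has_field_derivative_subset[OF P_Dl(1)[OF assms(1)]]) (auto intro: monoD[OF m])
  from DERIV_image_chain[OF this P_Dl(1)[OF assms(2)]] show ?thesis by (simp add: o_def)
qed


lemma comp_top:
  fixes f g :: "real \<Rightarrow> real"
  assumes m: "\<forall>\<^sub>F x in at_top. f x = x + m" and n: "\<forall>\<^sub>F x in at_top. g x = x + n"
  shows "\<forall>\<^sub>F x in at_top. f (g x) = x + (m + n)"
proof -
  obtain N1 where N1: "\<And>x. x \<ge> N1 \<Longrightarrow> f x = x + m" using m unfolding eventually_at_top_linorder by blast
  obtain N2 where N2: "\<And>x. x \<ge> N2 \<Longrightarrow> g x = x + n" using n unfolding eventually_at_top_linorder by blast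
  have "f (g x) = x + (m + n)" if "x \<ge> max N2 (N1 - n)" for x
  proof -
    have "g x = x + n" using N2 that by simp
    moreover have "x + n \<ge> N1" using that by simp
    ultimately show ?thesis using N1[of "x+n"] by simp
  qed
  then show ?thesis unfolding eventually_at_top_linorder by blast
qed

lemma comp_bot:
  fixes f g :: "real \<Rightarrow> real"
  assumes m: "\<forall>\<^sub>F x in at_bot. f x = x + m" and n: "\<forall>\<^sub>F x in at_bot. g x = x + n"
  shows "\<forall>\<^sub>F x in at_bot. f (g x) = x + (m + n)"
proof -
  obtain N1 where N1: "\<And>x. x \<le> N1 \<Longrightarrow> f x = x + m" using m unfolding eventually_at_bot_linorder by blast
  obtain N2 where N2: "\<And>x. x \<le> N2 \<Longrightarrow> g x = x + n" using n unfolding eventually_at_bot_linorder by blast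
  have "f (g x) = x + (m + n)" if "x \<le> min N2 (N1 - n)" for x
  proof -
    have "g x = x + n" using N2 that by simp
    moreover have "x + n \<le> N1" using that by simp
    ultimately show ?thesis using N1[of "x+n"] by simp
  qed
  then show ?thesis unfolding eventually_at_bot_linorder by blast
qed

lemma P_parts:
  assumes "P f"
  shows "mono f" "inj f" "surj f" "finite (Bk f)" "\<exists>m. \<forall>\<^sub>F x in at_top. f x = x + m"
    "\<exists>m. \<forall>\<^sub>F x in at_bot. f x = x + m"
  using assms unfolding P_def by (simp_all only:)

lemma P_intro:
  assumes "mono f" "inj f" "surj f" "finite (Bk f)" "\<exists>m. \<forall>\<^sub>F x in at_top. f x = x + m"
    "\<exists>m. \<forall>\<^sub>F x in at_bot. f x = x + m"
    "\<And>x. \<exists>D>0. (f has_real_derivative D) (at x within {x..})"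
    "\<And>x. \<exists>D>0. (f has_real_derivative D) (at x within {..x})"
  shows "P f"
  using assms unfolding P_def by (intro conjI allI) simp_all

lemma comp_Bk:
  assumes f: "P f" and g: "P g"
  shows "Bk (\<lambda>x. f (g x)) \<subseteq> Bk g \<union> g -` Bk f"
proof
  fix x assume "x \<in> Bk (\<lambda>x. f (g x))"
  then have "Dr f (g x) * Dr g x \<noteq> Dl f (g x) * Dl g x"
    unfolding Bk_def Dr_eq[OF comp_Dr[OF f g]] Dl_eq[OF comp_Dl[OF f g]] by simp
  then have "Dr f (g x) \<noteq> Dl f (g x) \<or> Dr g x \<noteq> Dl g x" by metis
  then show "x \<in> Bk g \<union> g -` Bk f" unfolding Bk_def by blast
qed

lemma P_comp:
  assumes f: "P f" and g: "P g"
  shows "P (\<lambda>x. f (g x))"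
proof (rule P_intro)
  note pf = P_parts[OF f] and pg = P_parts[OF g]
  show "mono (\<lambda>x. f (g x))" by (rule monoI) (intro monoD[OF pf(1)] monoD[OF pg(1)])
  have "inj (f \<circ> g)" by (rule inj_compose[OF pf(2) pg(2)])
  then show "inj (\<lambda>x. f (g x))" by (simp only: o_def)
  have "surj (f \<circ> g)" by (rule comp_surj[OF pg(3) pf(3)])
  then show "surj (\<lambda>x. f (g x))" by (simp only: o_def)
  show "finite (Bk (\<lambda>x. f (g x)))"
    by (rule finite_subset[OF comp_Bk[OF f g]]) (use pg(4) finite_vimageI[OF pf(4) pg(2)] in blast)
  show "\<exists>m. \<forall>\<^sub>F x in at_top. f (g x) = x + m" using comp_top pf(5) pg(5) by blast
  show "\<exists>m. \<forall>\<^sub>F x in at_bot. f (g x) = x + m" using comp_bot pf(6) pg(6) by blast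
  fix x
  show "\<exists>D>0. ((\<lambda>x. f (g x)) has_real_derivative D) (at x within {x..})"
    using comp_Dr[OF f g, of x] P_Dr(2)[OF f, of "g x"] P_Dr(2)[OF g, of x]
    by (intro exI[of _ "Dr f (g x) * Dr g x"]) simp
  show "\<exists>D>0. ((\<lambda>x. f (g x)) has_real_derivative D) (at x within {..x})"
    using comp_Dl[OF f g, of x] P_Dl(2)[OF f, of "g x"] P_Dl(2)[OF g, of x]
    by (intro exI[of _ "Dl f (g x) * Dl g x"]) simp
qed

lemma Tp_comp: assumes f: "P f" and g: "P g" shows "Tp (\<lambda>x. f (g x)) = Tp f + Tp g"
proof -
  obtain m where m: "\<forall>\<^sub>F x in at_top. f x = x + m" using P_parts(5)[OF f] by blast
  obtain n where n: "\<forall>\<^sub>F x in at_top. g x = x + n" using P_parts(5)[OF g] by blast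
  show ?thesis using Tp_eq[OF comp_top[OF m n]] Tp_eq[OF m] Tp_eq[OF n] by simp
qed

lemma Tm_comp: assumes f: "P f" and g: "P g" shows "Tm (\<lambda>x. f (g x)) = Tm f + Tm g"
proof -
  obtain m where m: "\<forall>\<^sub>F x in at_bot. f x = x + m" using P_parts(6)[OF f] by blast
  obtain n where n: "\<forall>\<^sub>F x in at_bot. g x = x + n" using P_parts(6)[OF g] by blast
  show ?thesis using Tm_eq[OF comp_bot[OF m n]] Tm_eq[OF m] Tm_eq[OF n] by simp
qed

lemma J_comp: assumes f: "P f" and g: "P g" shows "J (\<lambda>x. f (g x)) = J f + J g"
proof -
  note pf = P_parts[OF f] and pg = P_parts[OF g]
  have Dr: "Dr (\<lambda>x. f (g x)) x = Dr f (g x) * Dr g x" for x using Dr_eq[OF comp_Dr[OF f g]] .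
  have Dl: "Dl (\<lambda>x. f (g x)) x = Dl f (g x) * Dl g x" for x using Dl_eq[OF comp_Dl[OF f g]] .
  define S where "S = Bk g \<union> g -` Bk f"
  have fS: "finite S" unfolding S_def using pg(4) finite_vimageI[OF pf(4) pg(2)] by blast
  have BS: "Bk (\<lambda>x. f (g x)) \<subseteq> S" unfolding S_def by (rule comp_Bk[OF f g])
  have "J (\<lambda>x. f (g x)) = (\<Sum>x\<in>S. ln (Dr f (g x) * Dr g x) - ln (Dl f (g x) * Dl g x))"
    using J_superset[OF fS BS] by (simp only: Dr Dl)
  also have "\<dots> = (\<Sum>x\<in>S. ln (Dr f (g x)) - ln (Dl f (g x))) + (\<Sum>x\<in>S. ln (Dr g x) - ln (Dl g x))"
    unfolding sum.distrib[symmetric]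
  proof (rule sum.cong[OF refl])
    fix x
    have "Dr f (g x) > 0" "Dr g x > 0" "Dl f (g x) > 0" "Dl g x > 0"
      using P_Dr(2)[OF f] P_Dr(2)[OF g] P_Dl(2)[OF f] P_Dl(2)[OF g] by auto
    then show "ln (Dr f (g x) * Dr g x) - ln (Dl f (g x) * Dl g x) =
      ln (Dr f (g x)) - ln (Dl f (g x)) + (ln (Dr g x) - ln (Dl g x))" by (simp add: ln_mult)
  qed
  also have "(\<Sum>x\<in>S. ln (Dr f (g x)) - ln (Dl f (g x))) = (\<Sum>y\<in>g ` S. ln (Dr f y) - ln (Dl f y))"
    by (rule sum.reindex[symmetric, unfolded o_def]) (use pg(2) in \<open>auto simp: inj_on_def inj_def\<close>)
  also have "\<dots> = J f"
  proof (rule J_superset[symmetric])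
    show "finite (g ` S)" using fS by simp
    show "Bk f \<subseteq> g ` S"
    proof
      fix y assume "y \<in> Bk f"
      obtain x where "y = g x" using pg(3) by (metis surjD)
      then show "y \<in> g ` S" using \<open>y \<in> Bk f\<close> unfolding S_def by auto
    qed
  qed
  also have "(\<Sum>x\<in>S. ln (Dr g x) - ln (Dl g x)) = J g"
    by (rule J_superset[symmetric]) (use fS in \<open>auto simp: S_def\<close>)
  finally show ?thesis .
qed



lemma inv_mono_aux:
  fixes f g :: "real \<Rightarrow> real"
  assumes "mono f" "\<And>y. f (g y) = y" shows "mono g"
proof (rule monoI, rule ccontr)
  fix x y :: real assume "x \<le> y" "\<not> g x \<le> g y"
  then have "f (g y) \<le> f (g x)" using monoD[OF assms(1)] by simp
  then have "y \<le> x" using assms(2) by simp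
  with \<open>x \<le> y\<close> have "x = y" by simp
  with \<open>\<not> g x \<le> g y\<close> show False by simp
qed

lemma P_from_tables:
  fixes f g R L :: "real \<Rightarrow> real"
  assumes mono: "mono f" and fg: "\<And>y. f (g y) = y" and gf: "\<And>x. g (f x) = x"
    and R: "\<And>x. (f has_real_derivative R x) (at x within {x..})" "\<And>x. R x > 0"
    and L: "\<And>x. (f has_real_derivative L x) (at x within {..x})" "\<And>x. L x > 0"
    and B: "finite B" "\<And>x. x \<notin> B \<Longrightarrow> R x = L x"
    and top: "\<forall>\<^sub>F x in at_top. f x = x + p" and bot: "\<forall>\<^sub>F x in at_bot. f x = x + q"
  shows "P f" "J f = (\<Sum>x\<in>B. ln (R x) - ln (L x))" "Tp f = p" "Tm f = q"
proof -
  have Dr: "Dr f x = R x" for x by (rule Dr_eq[OF R(1)])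
  have Dl: "Dl f x = L x" for x by (rule Dl_eq[OF L(1)])
  have BB: "Bk f \<subseteq> B" unfolding Bk_def Dr Dl using B(2) by blast
  show "P f"
  proof (rule P_intro)
    show "mono f" by (rule mono)
    show "inj f" by (metis gf injI)
    show "surj f" by (metis fg surjI)
    show "finite (Bk f)" using BB B(1) finite_subset by blast
    show "\<exists>m. \<forall>\<^sub>F x in at_top. f x = x + m" using top by blast
    show "\<exists>m. \<forall>\<^sub>F x in at_bot. f x = x + m" using bot by blast
    fix x
    show "\<exists>D>0. (f has_real_derivative D) (at x within {x..})" using R by blast
    show "\<exists>D>0. (f has_real_derivative D) (at x within {..x})" using L by blast
  qed
  show "J f = (\<Sum>x\<in>B. ln (R x) - ln (L x))" using J_superset[OF B(1) BB] by (simp only: Dr Dl)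
  show "Tp f = p" by (rule Tp_eq[OF top])
  show "Tm f = q" by (rule Tm_eq[OF bot])
qed



lemma d_id: "((\<lambda>t::real. t) has_real_derivative 1) (at x)" by (rule DERIV_ident)
lemma d_plus: "((\<lambda>t::real. t + c) has_real_derivative 1) (at x)"
  by (auto intro!: derivative_eq_intros)
lemma d_b2: "x < 1 \<Longrightarrow> ((\<lambda>t::real. t / (1 - t)) has_real_derivative 1/(1-x)^2) (at x)"
  by (auto intro!: derivative_eq_intros simp: field_simps power2_eq_square)
lemma d_b3: "x > 0 \<Longrightarrow> ((\<lambda>t::real. (3*t - 1) / t) has_real_derivative 1/x^2) (at x)"
  by (auto intro!: derivative_eq_intros simp: field_simps power2_eq_square)

lemma gb1: "y \<le> 0 \<Longrightarrow> gen_b y = y" by (simp add: gen_b_def)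
lemma gb2: "0 \<le> y \<Longrightarrow> y \<le> 1/2 \<Longrightarrow> gen_b y = y / (1 - y)"
  by (cases "y = 0") (auto simp: gen_b_def)
lemma gb3: assumes "1/2 \<le> y" "y \<le> 1" shows "gen_b y = (3*y - 1) / y"
proof (cases "y = 1/2")
  case True show ?thesis unfolding True gen_b_def by simp
next
  case False with assms show ?thesis by (auto simp: gen_b_def)
qed
lemma gb4: "1 \<le> y \<Longrightarrow> gen_b y = y + 1"
  by (cases "y = 1") (auto simp: gen_b_def)

definition Rb :: "real \<Rightarrow> real" where
  "Rb x = (if x < 0 then 1 else if x < 1/2 then 1/(1-x)^2 else if x < 1 then 1/x^2 else 1)"
definition Lb :: "real \<Rightarrow> real" where
  "Lb x = (if x \<le> 0 then 1 else if x \<le> 1/2 then 1/(1-x)^2 else if x \<le> 1 then 1/x^2 else 1)"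

lemma b_right: "(gen_b has_real_derivative Rb x) (at x within {x..})"
proof -
  consider "x < 0" | "0 \<le> x" "x < 1/2" | "1/2 \<le> x" "x < 1" | "1 \<le> x" by linarith
  then show ?thesis
  proof cases
    case 1
    have "Rb x = 1" using 1 by (simp add: Rb_def)
    moreover have "(gen_b has_real_derivative 1) (at x within {x..})"
      by (rule right_piece[OF d_id, of "-x"]) (use 1 in \<open>auto simp: gb1 gb2 gb3 gb4\<close>)
    ultimately show ?thesis by simp
  next
    case 2
    have "Rb x = 1/(1-x)^2" using 2 by (simp add: Rb_def)
    moreover have "(gen_b has_real_derivative 1/(1-x)^2) (at x within {x..})"
      by (rule right_piece[OF d_b2, of _ "1/2 - x"]) (use 2 in \<open>auto simp: gb1 gb2 gb3 gb4\<close>)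
    ultimately show ?thesis by simp
  next
    case 3
    have "Rb x = 1/x^2" using 3 by (simp add: Rb_def)
    moreover have "(gen_b has_real_derivative 1/x^2) (at x within {x..})"
      by (rule right_piece[OF d_b3, of _ "1 - x"]) (use 3 in \<open>auto simp: gb1 gb2 gb3 gb4\<close>)
    ultimately show ?thesis by simp
  next
    case 4
    have "Rb x = 1" using 4 by (simp add: Rb_def)
    moreover have "(gen_b has_real_derivative 1) (at x within {x..})"
      by (rule right_piece[OF d_plus, of "1"]) (use 4 in \<open>auto simp: gb1 gb2 gb3 gb4\<close>)
    ultimately show ?thesis by simp
  qed
qed

lemma b_left: "(gen_b has_real_derivative Lb x) (at x within {..x})"
proof -
  consider "x \<le> 0" | "0 < x" "x \<le> 1/2" | "1/2 < x" "x \<le> 1" | "1 < x" by linarith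
  then show ?thesis
  proof cases
    case 1
    have "Lb x = 1" using 1 by (simp add: Lb_def)
    moreover have "(gen_b has_real_derivative 1) (at x within {..x})"
      by (rule left_piece[OF d_id, of "1"]) (use 1 in \<open>auto simp: gb1 gb2 gb3 gb4\<close>)
    ultimately show ?thesis by simp
  next
    case 2
    have "Lb x = 1/(1-x)^2" using 2 by (simp add: Lb_def)
    moreover have "(gen_b has_real_derivative 1/(1-x)^2) (at x within {..x})"
      by (rule left_piece[OF d_b2, of _ "x"]) (use 2 in \<open>auto simp: gb1 gb2 gb3 gb4\<close>)
    ultimately show ?thesis by simp
  next
    case 3
    have "Lb x = 1/x^2" using 3 by (simp add: Lb_def)
    moreover have "(gen_b has_real_derivative 1/x^2) (at x within {..x})"
      by (rule left_piece[OF d_b3, of _ "x - 1/2"]) (use 3 in \<open>auto simp: gb1 gb2 gb3 gb4\<close>)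
    ultimately show ?thesis by simp
  next
    case 4
    have "Lb x = 1" using 4 by (simp add: Lb_def)
    moreover have "(gen_b has_real_derivative 1) (at x within {..x})"
      by (rule left_piece[OF d_plus, of "x - 1"]) (use 4 in \<open>auto simp: gb1 gb2 gb3 gb4\<close>)
    ultimately show ?thesis by simp
  qed
qed



lemma mono_glue:
  fixes f :: "real \<Rightarrow> real"
  assumes "\<And>x y. x \<le> y \<Longrightarrow> y \<le> c \<Longrightarrow> f x \<le> f y"
      and "\<And>x y. c \<le> x \<Longrightarrow> x \<le> y \<Longrightarrow> f x \<le> f y"
    shows "x \<le> y \<Longrightarrow> f x \<le> f y"
proof -
  assume xy: "x \<le> y"
  consider "y \<le> c" | "c \<le> x" | "x \<le> c" "c \<le> y" by linarith
  then show ?thesis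
  proof cases
    case 3 then show ?thesis using assms(1)[of x c] assms(2)[of c y] by simp
  qed (use assms xy in auto)
qed

lemma b_mono2: assumes "0 \<le> x" "x \<le> y" "y \<le> 1/2" shows "x/(1-x) \<le> y/(1-(y::real))"
proof -
  have "1 - x > 0" "1 - y > 0" using assms by auto
  then have "x/(1-x) - y/(1-y) = (x - y)/((1-x)*(1-y))" by (simp add: field_simps)
  also have "\<dots> \<le> 0" using assms \<open>1 - x > 0\<close> \<open>1 - y > 0\<close> by (intro divide_nonpos_pos) auto
  finally show ?thesis by simp
qed
lemma b_mono3: assumes "1/2 \<le> x" "x \<le> y" shows "(3*x-1)/x \<le> (3*y-1)/(y::real)"
proof -
  have "x > 0" "y > 0" using assms by auto
  then have "(3*x-1)/x - (3*y-1)/y = (x - y)/(x*y)" by (simp add: field_simps)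
  also have "\<dots> \<le> 0" using assms \<open>x > 0\<close> \<open>y > 0\<close> by (intro divide_nonpos_pos) auto
  finally show ?thesis by simp
qed
lemma b2_le1: assumes "0 \<le> x" "x \<le> 1/2" shows "x/(1-x) \<le> (1::real)"
  using assms by (simp add: divide_simps)
lemma b3_ge1: assumes "1/2 \<le> y" shows "1 \<le> (3*y-1)/(y::real)"
  using assms by (simp add: divide_simps)
lemma b3_le2: assumes "1/2 \<le> y" "y \<le> 1" shows "(3*y-1)/(y::real) \<le> 2"
  using assms by (simp add: divide_simps)

lemma mono_b: "mono gen_b"
proof (rule monoI)
  fix x y :: real assume "x \<le> y"
  show "gen_b x \<le> gen_b y"
  proof (rule mono_glue[where c=0, OF _ _ \<open>x \<le> y\<close>])
    fix x y :: real assume "x \<le> y" "y \<le> 0" then show "gen_b x \<le> gen_b y" by (simp add: gb1)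
  next
    fix x y :: real assume "0 \<le> x" "x \<le> y"
    then show "gen_b x \<le> gen_b y"
    proof -
      consider "y \<le> 1/2" | "1/2 \<le> x" "y \<le> 1" | "x \<le> 1/2" "1/2 \<le> y" "y \<le> 1" | "1 \<le> x" | "1/2 \<le> x" "x \<le> 1" "1 \<le> y" | "x \<le> 1/2" "1 \<le> y"
        by linarith
      then show ?thesis
      proof cases
        case 1 then show ?thesis using \<open>0 \<le> x\<close> \<open>x \<le> y\<close> by (simp add: gb2 b_mono2)
      next
        case 2 then show ?thesis using \<open>x \<le> y\<close> by (simp add: gb3 b_mono3)
      next
        case 3
        have "gen_b x = x/(1-x)" "gen_b y = (3*y-1)/y" using 3 \<open>0 \<le> x\<close> by (simp_all add: gb2 gb3)
        moreover have "x/(1-x) \<le> 1" "1 \<le> (3*y-1)/y" using 3 \<open>0 \<le> x\<close> b2_le1[of x] b3_ge1[of y] by simp_all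
        ultimately show ?thesis by linarith
      next
        case 4 then show ?thesis using \<open>x \<le> y\<close> by (simp add: gb4)
      next
        case 5 then show ?thesis using b3_le2[of x] by (simp add: gb3 gb4)
      next
        case 6
        have "gen_b x = x/(1-x)" "gen_b y = y + 1" using 6 \<open>0 \<le> x\<close> by (simp_all add: gb2 gb4)
        moreover have "x/(1-x) \<le> 1" using 6 \<open>0 \<le> x\<close> b2_le1[of x] by simp_all
        ultimately show ?thesis using 6 by linarith
      qed
    qed
  qed
qed



definition binv :: "real \<Rightarrow> real" where
  "binv t = (if t \<le> 0 then t else if t \<le> 1 then t/(1+t) else if t \<le> 2 then 1/(3-t) else t - 1)"

lemma bi1: "y \<le> 0 \<Longrightarrow> binv y = y" by (simp add: binv_def)
lemma bi2: assumes "0 \<le> y" "y \<le> 1" shows "binv y = y / (1 + y)"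
proof (cases "y = 0")
  case True show ?thesis unfolding True binv_def by simp
next
  case False with assms show ?thesis by (auto simp: binv_def)
qed
lemma bi3: assumes "1 \<le> y" "y \<le> 2" shows "binv y = 1 / (3 - y)"
proof (cases "y = 1")
  case True show ?thesis unfolding True binv_def by simp
next
  case False with assms show ?thesis by (auto simp: binv_def)
qed
lemma bi4: assumes "2 \<le> y" shows "binv y = y - 1"
proof (cases "y = 2")
  case True show ?thesis unfolding True binv_def by simp
next
  case False with assms show ?thesis by (auto simp: binv_def)
qed

lemma b_binv: "gen_b (binv y) = y"
proof -
  consider "y \<le> 0" | "0 \<le> y" "y \<le> 1" | "1 \<le> y" "y \<le> 2" | "2 \<le> y" by linarith
  then show ?thesis
  proof cases
    case 1 then show ?thesis by (simp add: bi1 gb1)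
  next
    case 2
    have "0 \<le> y/(1+y)" "y/(1+y) \<le> 1/2" using 2 by (simp_all add: divide_simps)
    then show ?thesis using 2 by (simp add: bi2 gb2 field_simps)
  next
    case 3
    have "1/2 \<le> 1/(3-y)" "1/(3-y) \<le> 1" using 3 by (simp_all add: divide_simps)
    then show ?thesis using 3 by (simp add: bi3 gb3 field_simps)
  next
    case 4 then show ?thesis by (simp add: bi4 gb4)
  qed
qed

lemma binv_b: "binv (gen_b x) = x"
proof -
  consider "x \<le> 0" | "0 \<le> x" "x \<le> 1/2" | "1/2 \<le> x" "x \<le> 1" | "1 \<le> x" by linarith
  then show ?thesis
  proof cases
    case 1 then show ?thesis by (simp add: bi1 gb1)
  next
    case 2
    have "0 \<le> x/(1-x)" "x/(1-x) \<le> 1" using 2 by (simp_all add: divide_simps)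
    then show ?thesis using 2 by (simp add: bi2 gb2 field_simps)
  next
    case 3
    have "1 \<le> (3*x-1)/x" "(3*x-1)/x \<le> 2" using 3 by (simp_all add: divide_simps)
    then show ?thesis using 3 by (simp add: bi3 gb3 field_simps)
  next
    case 4 then show ?thesis by (simp add: bi4 gb4)
  qed
qed



lemma d_bi2: "x > -1 \<Longrightarrow> ((\<lambda>t::real. t / (1 + t)) has_real_derivative 1/(1+x)^2) (at x)"
  by (auto intro!: derivative_eq_intros simp: field_simps power2_eq_square)
lemma d_bi3: "x < 3 \<Longrightarrow> ((\<lambda>t::real. 1 / (3 - t)) has_real_derivative 1/(3-x)^2) (at x)"
  by (auto intro!: derivative_eq_intros simp: field_simps power2_eq_square)
lemma d_minus: "((\<lambda>t::real. t - c) has_real_derivative 1) (at x)"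
  by (auto intro!: derivative_eq_intros)

definition Rbi :: "real \<Rightarrow> real" where
  "Rbi x = (if x < 0 then 1 else if x < 1 then 1/(1+x)^2 else if x < 2 then 1/(3-x)^2 else 1)"
definition Lbi :: "real \<Rightarrow> real" where
  "Lbi x = (if x \<le> 0 then 1 else if x \<le> 1 then 1/(1+x)^2 else if x \<le> 2 then 1/(3-x)^2 else 1)"

lemma binv_right: "(binv has_real_derivative Rbi x) (at x within {x..})"
proof -
  consider "x < 0" | "0 \<le> x" "x < 1" | "1 \<le> x" "x < 2" | "2 \<le> x" by linarith
  then show ?thesis
  proof cases
    case 1
    have "Rbi x = 1" using 1 by (simp add: Rbi_def)
    moreover have "(binv has_real_derivative 1) (at x within {x..})"
      by (rule right_piece[OF d_id, of "-x"]) (use 1 in \<open>auto simp: bi1\<close>)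
    ultimately show ?thesis by simp
  next
    case 2
    have "Rbi x = 1/(1+x)^2" using 2 by (simp add: Rbi_def)
    moreover have "(binv has_real_derivative 1/(1+x)^2) (at x within {x..})"
      by (rule right_piece[OF d_bi2, of _ "1 - x"]) (use 2 in \<open>auto simp: bi2\<close>)
    ultimately show ?thesis by simp
  next
    case 3
    have "Rbi x = 1/(3-x)^2" using 3 by (simp add: Rbi_def)
    moreover have "(binv has_real_derivative 1/(3-x)^2) (at x within {x..})"
      by (rule right_piece[OF d_bi3, of _ "2 - x"]) (use 3 in \<open>auto simp: bi3\<close>)
    ultimately show ?thesis by simp
  next
    case 4
    have "Rbi x = 1" using 4 by (simp add: Rbi_def)
    moreover have "(binv has_real_derivative 1) (at x within {x..})"
      by (rule right_piece[OF d_minus, of "1"]) (use 4 in \<open>auto simp: bi4\<close>)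
    ultimately show ?thesis by simp
  qed
qed

lemma binv_left: "(binv has_real_derivative Lbi x) (at x within {..x})"
proof -
  consider "x \<le> 0" | "0 < x" "x \<le> 1" | "1 < x" "x \<le> 2" | "2 < x" by linarith
  then show ?thesis
  proof cases
    case 1
    have "Lbi x = 1" using 1 by (simp add: Lbi_def)
    moreover have "(binv has_real_derivative 1) (at x within {..x})"
      by (rule left_piece[OF d_id, of "1"]) (use 1 in \<open>auto simp: bi1\<close>)
    ultimately show ?thesis by simp
  next
    case 2
    have "Lbi x = 1/(1+x)^2" using 2 by (simp add: Lbi_def)
    moreover have "(binv has_real_derivative 1/(1+x)^2) (at x within {..x})"
      by (rule left_piece[OF d_bi2, of _ "x"]) (use 2 in \<open>auto simp: bi2\<close>)
    ultimately show ?thesis by simp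
  next
    case 3
    have "Lbi x = 1/(3-x)^2" using 3 by (simp add: Lbi_def)
    moreover have "(binv has_real_derivative 1/(3-x)^2) (at x within {..x})"
      by (rule left_piece[OF d_bi3, of _ "x - 1"]) (use 3 in \<open>auto simp: bi3\<close>)
    ultimately show ?thesis by simp
  next
    case 4
    have "Lbi x = 1" using 4 by (simp add: Lbi_def)
    moreover have "(binv has_real_derivative 1) (at x within {..x})"
      by (rule left_piece[OF d_minus, of "x - 2"]) (use 4 in \<open>auto simp: bi4\<close>)
    ultimately show ?thesis by simp
  qed
qed

lemma Rb_Lb: "Rb x = Lb x"
proof -
  consider "x < 0" | "x = 0" | "0 < x" "x < 1/2" | "x = 1/2" | "1/2 < x" "x < 1" | "x = 1" | "1 < x" by linarith
  then show ?thesis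
  proof cases
    case 4 show ?thesis unfolding 4 Rb_def Lb_def by simp
  qed (auto simp: Rb_def Lb_def)
qed

lemma Rbi_Lbi: "Rbi x = Lbi x"
proof -
  consider "x < 0" | "x = 0" | "0 < x" "x < 1" | "x = 1" | "1 < x" "x < 2" | "x = 2" | "2 < x" by linarith
  then show ?thesis
    by cases (auto simp: Rbi_def Lbi_def)
qed

lemma P_b: "P gen_b" "J gen_b = 0" "Tp gen_b = 1" "Tm gen_b = 0"
proof -
  have top: "\<forall>\<^sub>F x in at_top. gen_b x = x + 1"
    by (rule eventually_at_top_linorderI[of 1]) (simp add: gb4)
  have bot: "\<forall>\<^sub>F x in at_bot. gen_b x = x + 0"
    by (rule eventually_at_bot_linorderI[of 0]) (simp add: gb1)
  note T = P_from_tables[OF mono_b b_binv binv_b b_right _ b_left _ finite.emptyI _ top bot]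
  have "Rb x > 0" for x by (simp add: Rb_def)
  moreover have "Lb x > 0" for x by (simp add: Lb_def)
  ultimately show "P gen_b" "J gen_b = 0" "Tp gen_b = 1" "Tm gen_b = 0" using T Rb_Lb by auto
qed

lemma mono_binv: "mono binv" by (rule inv_mono_aux[OF mono_b b_binv])

lemma P_binv: "P binv" "J binv = 0" "Tp binv = -1" "Tm binv = 0"
proof -
  have top: "\<forall>\<^sub>F x in at_top. binv x = x + -1"
    by (rule eventually_at_top_linorderI[of 2]) (simp add: bi4)
  have bot: "\<forall>\<^sub>F x in at_bot. binv x = x + 0"
    by (rule eventually_at_bot_linorderI[of 0]) (simp add: bi1)
  note T = P_from_tables[OF mono_binv binv_b b_binv binv_right _ binv_left _ finite.emptyI _ top bot]
  have "Rbi x > 0" for x by (simp add: Rbi_def)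
  moreover have "Lbi x > 0" for x by (simp add: Lbi_def)
  ultimately show "P binv" "J binv = 0" "Tp binv = -1" "Tm binv = 0" using T Rbi_Lbi by auto
qed



lemma gc1: "y \<le> 0 \<Longrightarrow> gen_c y = y"
  by (cases "y = 0") (auto simp: gen_c_def)
lemma gc2: "0 \<le> y \<Longrightarrow> y \<le> 1 \<Longrightarrow> gen_c y = 2*y / (y + 1)"
  by (simp add: gen_c_def)
lemma gc3: assumes "1 \<le> y" shows "gen_c y = y"
proof (cases "y = 1")
  case True show ?thesis unfolding True gen_c_def by simp
next
  case False with assms show ?thesis by (auto simp: gen_c_def)
qed

definition cinv :: "real \<Rightarrow> real" where
  "cinv t = (if 0 \<le> t \<and> t \<le> 1 then t / (2 - t) else t)"

lemma ci1: "y \<le> 0 \<Longrightarrow> cinv y = y"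
  by (cases "y = 0") (auto simp: cinv_def)
lemma ci2: "0 \<le> y \<Longrightarrow> y \<le> 1 \<Longrightarrow> cinv y = y / (2 - y)"
  by (simp add: cinv_def)
lemma ci3: assumes "1 \<le> y" shows "cinv y = y"
proof (cases "y = 1")
  case True show ?thesis unfolding True cinv_def by simp
next
  case False with assms show ?thesis by (auto simp: cinv_def)
qed

lemma c_cinv: "gen_c (cinv y) = y"
proof -
  consider "y \<le> 0" | "0 \<le> y" "y \<le> 1" | "1 \<le> y" by linarith
  then show ?thesis
  proof cases
    case 1 then show ?thesis by (simp add: ci1 gc1)
  next
    case 2
    have "0 \<le> y/(2-y)" "y/(2-y) \<le> 1" using 2 by (simp_all add: divide_simps)
    then show ?thesis using 2 by (simp add: ci2 gc2 field_simps)
  next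
    case 3 then show ?thesis by (simp add: ci3 gc3)
  qed
qed

lemma cinv_c: "cinv (gen_c x) = x"
proof -
  consider "x \<le> 0" | "0 \<le> x" "x \<le> 1" | "1 \<le> x" by linarith
  then show ?thesis
  proof cases
    case 1 then show ?thesis by (simp add: ci1 gc1)
  next
    case 2
    have "0 \<le> 2*x/(x+1)" "2*x/(x+1) \<le> 1" using 2 by (simp_all add: divide_simps)
    then show ?thesis using 2 by (simp add: ci2 gc2 field_simps)
  next
    case 3 then show ?thesis by (simp add: ci3 gc3)
  qed
qed

lemma c_mono2: assumes "0 \<le> x" "x \<le> y" shows "2*x/(x+1) \<le> 2*y/(y+(1::real))"
proof -
  have "x + 1 > 0" "y + 1 > 0" using assms by auto
  then have "2*x/(x+1) - 2*y/(y+1) = 2*(x - y)/((x+1)*(y+1))" by (simp add: field_simps)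
  also have "\<dots> \<le> 0" using assms \<open>x + 1 > 0\<close> \<open>y + 1 > 0\<close> by (intro divide_nonpos_pos) auto
  finally show ?thesis by simp
qed
lemma c2_le1: assumes "0 \<le> x" "x \<le> 1" shows "2*x/(x+1) \<le> (1::real)"
  using assms by (simp add: divide_simps)
lemma c2_ge0: assumes "0 \<le> x" shows "0 \<le> 2*x/(x+(1::real))"
  using assms by (simp add: divide_simps)

lemma mono_c: "mono gen_c"
proof (rule monoI)
  fix x y :: real assume "x \<le> y"
  show "gen_c x \<le> gen_c y"
  proof (rule mono_glue[where c=0, OF _ _ \<open>x \<le> y\<close>])
    fix x y :: real assume "x \<le> y" "y \<le> 0" then show "gen_c x \<le> gen_c y" by (simp add: gc1)
  next
    fix x y :: real assume "0 \<le> x" "x \<le> y"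
    consider "y \<le> 1" | "1 \<le> x" | "x \<le> 1" "1 \<le> y" by linarith
    then show "gen_c x \<le> gen_c y"
    proof cases
      case 1 then show ?thesis using \<open>0 \<le> x\<close> \<open>x \<le> y\<close> by (simp add: gc2 c_mono2)
    next
      case 2 then show ?thesis using \<open>x \<le> y\<close> by (simp add: gc3)
    next
      case 3
      have "gen_c x = 2*x/(x+1)" "gen_c y = y" using 3 \<open>0 \<le> x\<close> by (simp_all add: gc2 gc3)
      moreover have "2*x/(x+1) \<le> 1" using 3 \<open>0 \<le> x\<close> c2_le1[of x] by simp
      ultimately show ?thesis using 3 by linarith
    qed
  qed
qed

lemma mono_cinv: "mono cinv" by (rule inv_mono_aux[OF mono_c c_cinv])

lemma d_c2: "x > -1 \<Longrightarrow> ((\<lambda>t::real. 2*t / (t + 1)) has_real_derivative 2/(x+1)^2) (at x)"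
  by (auto intro!: derivative_eq_intros simp: field_simps power2_eq_square)
lemma d_ci2: "x < 2 \<Longrightarrow> ((\<lambda>t::real. t / (2 - t)) has_real_derivative 2/(2-x)^2) (at x)"
  by (auto intro!: derivative_eq_intros simp: field_simps power2_eq_square)

definition Rc :: "real \<Rightarrow> real" where
  "Rc x = (if x < 0 then 1 else if x < 1 then 2/(x+1)^2 else 1)"
definition Lc :: "real \<Rightarrow> real" where
  "Lc x = (if x \<le> 0 then 1 else if x \<le> 1 then 2/(x+1)^2 else 1)"
definition Rci :: "real \<Rightarrow> real" where
  "Rci x = (if x < 0 then 1 else if x < 1 then 2/(2-x)^2 else 1)"
definition Lci :: "real \<Rightarrow> real" where
  "Lci x = (if x \<le> 0 then 1 else if x \<le> 1 then 2/(2-x)^2 else 1)"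

lemma c_right: "(gen_c has_real_derivative Rc x) (at x within {x..})"
proof -
  consider "x < 0" | "0 \<le> x" "x < 1" | "1 \<le> x" by linarith
  then show ?thesis
  proof cases
    case 1
    have "Rc x = 1" using 1 by (simp add: Rc_def)
    moreover have "(gen_c has_real_derivative 1) (at x within {x..})"
      by (rule right_piece[OF d_id, of "-x"]) (use 1 in \<open>auto simp: gc1\<close>)
    ultimately show ?thesis by simp
  next
    case 2
    have "Rc x = 2/(x+1)^2" using 2 by (simp add: Rc_def)
    moreover have "(gen_c has_real_derivative 2/(x+1)^2) (at x within {x..})"
      by (rule right_piece[OF d_c2, of _ "1 - x"]) (use 2 in \<open>auto simp: gc2\<close>)
    ultimately show ?thesis by simp
  next
    case 3
    have "Rc x = 1" using 3 by (simp add: Rc_def)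
    moreover have "(gen_c has_real_derivative 1) (at x within {x..})"
      by (rule right_piece[OF d_id, of "1"]) (use 3 in \<open>auto simp: gc3\<close>)
    ultimately show ?thesis by simp
  qed
qed

lemma c_left: "(gen_c has_real_derivative Lc x) (at x within {..x})"
proof -
  consider "x \<le> 0" | "0 < x" "x \<le> 1" | "1 < x" by linarith
  then show ?thesis
  proof cases
    case 1
    have "Lc x = 1" using 1 by (simp add: Lc_def)
    moreover have "(gen_c has_real_derivative 1) (at x within {..x})"
      by (rule left_piece[OF d_id, of "1"]) (use 1 in \<open>auto simp: gc1\<close>)
    ultimately show ?thesis by simp
  next
    case 2
    have "Lc x = 2/(x+1)^2" using 2 by (simp add: Lc_def)
    moreover have "(gen_c has_real_derivative 2/(x+1)^2) (at x within {..x})"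
      by (rule left_piece[OF d_c2, of _ "x"]) (use 2 in \<open>auto simp: gc2\<close>)
    ultimately show ?thesis by simp
  next
    case 3
    have "Lc x = 1" using 3 by (simp add: Lc_def)
    moreover have "(gen_c has_real_derivative 1) (at x within {..x})"
      by (rule left_piece[OF d_id, of "x - 1"]) (use 3 in \<open>auto simp: gc3\<close>)
    ultimately show ?thesis by simp
  qed
qed

lemma cinv_right: "(cinv has_real_derivative Rci x) (at x within {x..})"
proof -
  consider "x < 0" | "0 \<le> x" "x < 1" | "1 \<le> x" by linarith
  then show ?thesis
  proof cases
    case 1
    have "Rci x = 1" using 1 by (simp add: Rci_def)
    moreover have "(cinv has_real_derivative 1) (at x within {x..})"
      by (rule right_piece[OF d_id, of "-x"]) (use 1 in \<open>auto simp: ci1\<close>)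
    ultimately show ?thesis by simp
  next
    case 2
    have "Rci x = 2/(2-x)^2" using 2 by (simp add: Rci_def)
    moreover have "(cinv has_real_derivative 2/(2-x)^2) (at x within {x..})"
      by (rule right_piece[OF d_ci2, of _ "1 - x"]) (use 2 in \<open>auto simp: ci2\<close>)
    ultimately show ?thesis by simp
  next
    case 3
    have "Rci x = 1" using 3 by (simp add: Rci_def)
    moreover have "(cinv has_real_derivative 1) (at x within {x..})"
      by (rule right_piece[OF d_id, of "1"]) (use 3 in \<open>auto simp: ci3\<close>)
    ultimately show ?thesis by simp
  qed
qed

lemma cinv_left: "(cinv has_real_derivative Lci x) (at x within {..x})"
proof -
  consider "x \<le> 0" | "0 < x" "x \<le> 1" | "1 < x" by linarith
  then show ?thesis
  proof cases
    case 1
    have "Lci x = 1" using 1 by (simp add: Lci_def)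
    moreover have "(cinv has_real_derivative 1) (at x within {..x})"
      by (rule left_piece[OF d_id, of "1"]) (use 1 in \<open>auto simp: ci1\<close>)
    ultimately show ?thesis by simp
  next
    case 2
    have "Lci x = 2/(2-x)^2" using 2 by (simp add: Lci_def)
    moreover have "(cinv has_real_derivative 2/(2-x)^2) (at x within {..x})"
      by (rule left_piece[OF d_ci2, of _ "x"]) (use 2 in \<open>auto simp: ci2\<close>)
    ultimately show ?thesis by simp
  next
    case 3
    have "Lci x = 1" using 3 by (simp add: Lci_def)
    moreover have "(cinv has_real_derivative 1) (at x within {..x})"
      by (rule left_piece[OF d_id, of "x - 1"]) (use 3 in \<open>auto simp: ci3\<close>)
    ultimately show ?thesis by simp
  qed
qed

lemma P_c: "P gen_c" "J gen_c = 2 * ln 2" "Tp gen_c = 0" "Tm gen_c = 0"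
proof -
  have top: "\<forall>\<^sub>F x in at_top. gen_c x = x + 0"
    by (rule eventually_at_top_linorderI[of 1]) (simp add: gc3)
  have bot: "\<forall>\<^sub>F x in at_bot. gen_c x = x + 0"
    by (rule eventually_at_bot_linorderI[of 0]) (simp add: gc1)
  have RL: "x \<notin> {0,1} \<Longrightarrow> Rc x = Lc x" for x
    by (cases "x < 0"; cases "x < 1") (auto simp: Rc_def Lc_def)
  have pR: "Rc x > 0" for x by (simp add: Rc_def)
  have pL: "Lc x > 0" for x by (simp add: Lc_def)
  have fB: "finite {0::real,1}" by simp
  note T = P_from_tables[where B="{0,1}", OF mono_c c_cinv cinv_c c_right pR c_left pL fB RL top bot]
  show "P gen_c" "Tp gen_c = 0" "Tm gen_c = 0" using T by auto
  have "J gen_c = (ln (Rc 0) - ln (Lc 0)) + (ln (Rc 1) - ln (Lc 1))" using T(2) by simp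
  also have "\<dots> = 2 * ln 2" by (simp add: Rc_def Lc_def ln_div)
  finally show "J gen_c = 2 * ln 2" .
qed

lemma P_cinv: "P cinv" "J cinv = - (2 * ln 2)" "Tp cinv = 0" "Tm cinv = 0"
proof -
  have top: "\<forall>\<^sub>F x in at_top. cinv x = x + 0"
    by (rule eventually_at_top_linorderI[of 1]) (simp add: ci3)
  have bot: "\<forall>\<^sub>F x in at_bot. cinv x = x + 0"
    by (rule eventually_at_bot_linorderI[of 0]) (simp add: ci1)
  have RL: "x \<notin> {0,1} \<Longrightarrow> Rci x = Lci x" for x
    by (cases "x < 0"; cases "x < 1") (auto simp: Rci_def Lci_def)
  have pR: "Rci x > 0" for x by (simp add: Rci_def)
  have pL: "Lci x > 0" for x by (simp add: Lci_def)
  have fB: "finite {0::real,1}" by simp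
  note T = P_from_tables[where B="{0,1}", OF mono_cinv cinv_c c_cinv cinv_right pR cinv_left pL fB RL top bot]
  show "P cinv" "Tp cinv = 0" "Tm cinv = 0" using T by auto
  have "J cinv = (ln (Rci 0) - ln (Lci 0)) + (ln (Rci 1) - ln (Lci 1))" using T(2) by simp
  also have "\<dots> = - (2 * ln 2)" by (simp add: Rci_def Lci_def ln_div)
  finally show "J cinv = - (2 * ln 2)" .
qed

lemma P_a: "P gen_a" "J gen_a = 0" "Tp gen_a = 1" "Tm gen_a = 1"
proof -
  have fg: "gen_a (y - 1) = y" for y by (simp add: gen_a_def)
  have gf: "gen_a x - 1 = x" for x by (simp add: gen_a_def)
  have m: "mono gen_a" by (rule monoI) (simp add: gen_a_def)
  have R: "(gen_a has_real_derivative 1) (at x within {x..})" for x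
    by (rule right_piece[OF d_plus, of 1]) (auto simp: gen_a_def)
  have L: "(gen_a has_real_derivative 1) (at x within {..x})" for x
    by (rule left_piece[OF d_plus, of 1]) (auto simp: gen_a_def)
  have top: "\<forall>\<^sub>F x in at_top. gen_a x = x + 1" by (simp add: gen_a_def)
  have bot: "\<forall>\<^sub>F x in at_bot. gen_a x = x + 1" by (simp add: gen_a_def)
  note T = P_from_tables[where g="\<lambda>y. y - 1" and R="\<lambda>_. 1" and L="\<lambda>_. 1", OF m fg gf R _ L _ finite.emptyI _ top bot]
  then show "P gen_a" "J gen_a = 0" "Tp gen_a = 1" "Tm gen_a = 1" by auto
qed

lemma P_ainv: "P (\<lambda>y. y - 1)" "J (\<lambda>y. y - 1) = 0" "Tp (\<lambda>y. y - 1) = -1" "Tm (\<lambda>y. y - 1) = -1"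
proof -
  have fg: "gen_a y - 1 = y" for y by (simp add: gen_a_def)
  have gf: "gen_a (y - 1) = y" for y by (simp add: gen_a_def)
  have m: "mono (\<lambda>y::real. y - 1)" by (rule monoI) simp
  have R: "((\<lambda>y. y - 1) has_real_derivative 1) (at x within {x..})" for x
    by (rule right_piece[OF d_minus, of 1]) auto
  have L: "((\<lambda>y. y - 1) has_real_derivative 1) (at x within {..x})" for x
    by (rule left_piece[OF d_minus, of 1]) auto
  have top: "\<forall>\<^sub>F x in at_top. x - 1 = x + (-1::real)" by simp
  have bot: "\<forall>\<^sub>F x in at_bot. x - 1 = x + (-1::real)" by simp
  note T = P_from_tables[where g=gen_a and R="\<lambda>_. 1" and L="\<lambda>_. 1", OF m fg gf R _ L _ finite.emptyI _ top bot]
  then show "P (\<lambda>y. y - 1)" "J (\<lambda>y. y - 1) = 0" "Tp (\<lambda>y. y - 1) = -1" "Tm (\<lambda>y. y - 1) = -1" by auto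
qed



lemma Bij_UNIV: "Bij (UNIV::real set) = {f. bij f}" by (auto simp: Bij_def)
lemma carrier_SymR: "carrier SymR = {f. bij f}" by (simp add: BijGroup_def Bij_UNIV)
lemma mult_SymR: "bij f \<Longrightarrow> bij g \<Longrightarrow> f \<otimes>\<^bsub>SymR\<^esub> g = (\<lambda>x. f (g x))"
  by (simp add: BijGroup_def Bij_UNIV compose_def restrict_UNIV)
lemma one_SymR: "\<one>\<^bsub>SymR\<^esub> = (\<lambda>x. x)" by (simp add: BijGroup_def restrict_UNIV)
lemma inv_SymR:
  assumes "bij f" "\<And>x. g (f x) = x" "\<And>y. f (g y) = y"
  shows "inv\<^bsub>SymR\<^esub> f = g"
proof -
  have "f \<in> Bij UNIV" using assms(1) by (simp add: Bij_UNIV)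
  then have "inv\<^bsub>SymR\<^esub> f = (\<lambda>x\<in>UNIV. inv_into UNIV f x)" by (rule inv_BijGroup)
  also have "\<dots> = inv_into UNIV f" by (simp add: restrict_UNIV)
  also have "\<dots> = g" by (rule inv_equality) (use assms in auto)
  finally show ?thesis .
qed

lemma bij_from_inv: "(\<And>x. g (f x) = x) \<Longrightarrow> (\<And>y. f (g y) = y) \<Longrightarrow> bij f"
  by (metis bijI' )

lemma bij_a: "bij gen_a" by (rule bij_from_inv[of "\<lambda>y. y - 1"]) (simp_all add: gen_a_def)
lemma bij_b: "bij gen_b" by (rule bij_from_inv[of binv]) (simp_all add: binv_b b_binv)
lemma bij_c: "bij gen_c" by (rule bij_from_inv[of cinv]) (simp_all add: cinv_c c_cinv)

lemma inv_a: "inv\<^bsub>SymR\<^esub> gen_a = (\<lambda>y. y - 1)" by (rule inv_SymR[OF bij_a]) (simp_all add: gen_a_def)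
lemma inv_b: "inv\<^bsub>SymR\<^esub> gen_b = binv" by (rule inv_SymR[OF bij_b]) (simp_all add: binv_b b_binv)
lemma inv_c: "inv\<^bsub>SymR\<^esub> gen_c = cinv" by (rule inv_SymR[OF bij_c]) (simp_all add: cinv_c c_cinv)

abbreviation gens :: "(real \<Rightarrow> real) set" where "gens \<equiv> {gen_a, gen_b, gen_c}"

lemma gens_sub: "gens \<subseteq> carrier SymR" using bij_a bij_b bij_c by (simp add: carrier_SymR)

lemma subgroup_G0: "subgroup (generate SymR gens) SymR"
  by (rule group.generate_is_subgroup[OF group_BijGroup gens_sub])

lemma group_G0: "group G0"
  unfolding G0_def by (rule subgroup.subgroup_is_group[OF subgroup_G0 group_BijGroup])

lemma carrier_G0: "carrier G0 = generate SymR gens" by (simp add: G0_def)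
lemma carrier_G0': "carrier G0 = generate G0 gens"
  unfolding G0_def using group.generate_consistent[OF group_BijGroup _ subgroup_G0, of gens]
  by (simp add: generate.incl subsetI)
lemma mult_G0: "x \<otimes>\<^bsub>G0\<^esub> y = x \<otimes>\<^bsub>SymR\<^esub> y" by (simp add: G0_def)
lemma one_G0: "\<one>\<^bsub>G0\<^esub> = (\<lambda>x. x)" by (simp add: G0_def one_SymR)
lemma inv_G0: "x \<in> carrier G0 \<Longrightarrow> inv\<^bsub>G0\<^esub> x = inv\<^bsub>SymR\<^esub> x"
  unfolding G0_def using group.m_inv_consistent[OF group_BijGroup subgroup_G0] by simp
lemma G0_bij: "x \<in> carrier G0 \<Longrightarrow> bij x"
  using subgroup.subset[OF subgroup_G0] by (auto simp: carrier_G0 carrier_SymR)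
lemma mult_G0': "x \<in> carrier G0 \<Longrightarrow> y \<in> carrier G0 \<Longrightarrow> x \<otimes>\<^bsub>G0\<^esub> y = (\<lambda>t. x (y t))"
  by (simp add: mult_G0 mult_SymR G0_bij)
lemma gens_G0: "gen_a \<in> carrier G0" "gen_b \<in> carrier G0" "gen_c \<in> carrier G0"
  by (simp_all add: carrier_G0 generate.incl)

definition Q :: "(real \<Rightarrow> real) \<Rightarrow> bool" where
  "Q f \<longleftrightarrow> P f \<and> Tm f \<in> \<int> \<and> Tp f \<in> \<int> \<and> J f / (2 * ln 2) \<in> \<int>"

lemma Q_comp: assumes "Q f" "Q g" shows "Q (\<lambda>x. f (g x))"
proof -
  have "P f" "P g" using assms by (simp_all add: Q_def)
  then show ?thesis using assms
    by (simp add: Q_def P_comp Tp_comp Tm_comp J_comp add_divide_distrib)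
qed

lemma Q_a: "Q gen_a" using P_a by (simp add: Q_def)
lemma Q_b: "Q gen_b" using P_b by (simp add: Q_def)
lemma Q_c: "Q gen_c" using P_c by (simp add: Q_def)
lemma Q_ainv: "Q (\<lambda>y. y - 1)" using P_ainv by (simp add: Q_def)
lemma Q_binv: "Q binv" using P_binv by (simp add: Q_def)
lemma Q_cinv: "Q cinv" using P_cinv by (simp add: Q_def Ints_minus)
lemma Q_id: "Q (\<lambda>x. x)"
proof -
  have "Q (\<lambda>x. gen_a (x - 1))" by (rule Q_comp[OF Q_a Q_ainv])
  moreover have "(\<lambda>x. gen_a (x - 1)) = (\<lambda>x. x)" by (simp add: gen_a_def)
  ultimately show ?thesis by simp
qed

lemma Q_G0: "f \<in> carrier G0 \<Longrightarrow> Q f"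
  unfolding carrier_G0
proof (induction rule: generate.induct)
  case one then show ?case by (simp add: one_SymR Q_id)
next
  case (incl h) then show ?case using Q_a Q_b Q_c by auto
next
  case (inv h) then show ?case using Q_ainv Q_binv Q_cinv inv_a inv_b inv_c by auto
next
  case (eng h1 h2)
  have "bij h1" "bij h2" using eng.hyps G0_bij by (simp_all add: carrier_G0)
  then show ?case using eng.IH by (simp add: mult_SymR Q_comp)
qed



lemma group_Z3: "group Z3"
  unfolding Z3_def by (intro DirProd_group group_integer_group)
lemma carrier_Z3: "carrier Z3 = UNIV" by (simp add: Z3_def)
lemma one_Z3: "\<one>\<^bsub>Z3\<^esub> = (0, 0, 0)" by (simp add: Z3_def)
lemma mult_Z3: "(a, b, c) \<otimes>\<^bsub>Z3\<^esub> (a', b', c') = (a + a', b + b', c + c')" by (simp add: Z3_def)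
lemma inv_Z3: "inv\<^bsub>Z3\<^esub> (a, b, c) = (-a, -b, -c)"
  by (rule group.inv_equality[OF group_Z3]) (simp_all add: mult_Z3 one_Z3 carrier_Z3)
lemma nat_pow_Z3: "(a, b, c) [^]\<^bsub>Z3\<^esub> (n::nat) = (int n * a, int n * b, int n * c)"
  by (induction n) (simp_all add: one_Z3 mult_Z3 algebra_simps)
lemma int_pow_Z3: "(a, b, c) [^]\<^bsub>Z3\<^esub> (i::int) = (i * a, i * b, i * c)"
  by (simp add: int_pow_def2 nat_pow_Z3 inv_Z3)

definition piZ :: "(real \<Rightarrow> real) \<Rightarrow> int \<times> int \<times> int" where
  "piZ f = (\<lfloor>Tm f\<rfloor>, \<lfloor>Tp f - Tm f\<rfloor>, \<lfloor>J f / (2 * ln 2)\<rfloor>)"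

lemma floor_add_Ints: "(x::real) \<in> \<int> \<Longrightarrow> y \<in> \<int> \<Longrightarrow> \<lfloor>x + y\<rfloor> = \<lfloor>x\<rfloor> + \<lfloor>y\<rfloor>"
  by (metis Ints_cases floor_of_int of_int_add)

lemma pi_comp: assumes "Q f" "Q g" shows "piZ (\<lambda>x. f (g x)) = piZ f \<otimes>\<^bsub>Z3\<^esub> piZ g"
proof -
  have p: "P f" "P g" and i: "Tm f \<in> \<int>" "Tp f \<in> \<int>" "J f / (2 * ln 2) \<in> \<int>"
     "Tm g \<in> \<int>" "Tp g \<in> \<int>" "J g / (2 * ln 2) \<in> \<int>" using assms by (simp_all add: Q_def)
  have e1: "\<lfloor>Tm f + Tm g\<rfloor> = \<lfloor>Tm f\<rfloor> + \<lfloor>Tm g\<rfloor>" using i by (simp add: floor_add_Ints)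
  have d: "Tp f - Tm f \<in> \<int>" "Tp g - Tm g \<in> \<int>" using i by (simp_all add: Ints_diff)
  have eq: "Tp f + Tp g - (Tm f + Tm g) = (Tp f - Tm f) + (Tp g - Tm g)" by simp
  have e2: "\<lfloor>Tp f + Tp g - (Tm f + Tm g)\<rfloor> = \<lfloor>Tp f - Tm f\<rfloor> + \<lfloor>Tp g - Tm g\<rfloor>"
    unfolding eq by (rule floor_add_Ints[OF d])
  have e3: "\<lfloor>(J f + J g) / (2 * ln 2)\<rfloor> = \<lfloor>J f / (2 * ln 2)\<rfloor> + \<lfloor>J g / (2 * ln 2)\<rfloor>"
    using i by (simp add: floor_add_Ints add_divide_distrib)
  show ?thesis unfolding piZ_def mult_Z3 using p e1 e2 e3
    by (simp add: Tp_comp Tm_comp J_comp)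
qed

lemma pi_hom: "piZ \<in> hom G0 Z3"
  unfolding hom_def
proof (intro CollectI conjI ballI)
  show "piZ \<in> carrier G0 \<rightarrow> carrier Z3" by (simp add: carrier_Z3)
  fix x y assume "x \<in> carrier G0" "y \<in> carrier G0"
  then show "piZ (x \<otimes>\<^bsub>G0\<^esub> y) = piZ x \<otimes>\<^bsub>Z3\<^esub> piZ y"
    by (simp add: mult_G0' pi_comp Q_G0)
qed

lemma group_hom_pi: "group_hom G0 Z3 piZ"
  by (simp add: group_hom_def group_hom_axioms_def group_G0 group_Z3 pi_hom)

lemma pi_a: "piZ gen_a = (1, 0, 0)" using P_a by (simp add: piZ_def)
lemma pi_b: "piZ gen_b = (0, 1, 0)" using P_b by (simp add: piZ_def)
lemma pi_c: "piZ gen_c = (0, 0, 1)" using P_c by (simp add: piZ_def)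

lemma pi_surj: "piZ ` carrier G0 = carrier Z3"
proof
  show "piZ ` carrier G0 \<subseteq> carrier Z3" by (simp add: carrier_Z3)
  show "carrier Z3 \<subseteq> piZ ` carrier G0"
  proof
    fix z assume "z \<in> carrier Z3"
    obtain i j k where z: "z = (i, j, k)" by (cases z) auto
    interpret h: group_hom G0 Z3 piZ by (rule group_hom_pi)
    let ?x = "gen_a [^]\<^bsub>G0\<^esub> i \<otimes>\<^bsub>G0\<^esub> gen_b [^]\<^bsub>G0\<^esub> j \<otimes>\<^bsub>G0\<^esub> gen_c [^]\<^bsub>G0\<^esub> k"
    have x: "?x \<in> carrier G0" using gens_G0 by simp
    have "piZ ?x = (i, j, k)"
      using gens_G0 by (simp add: h.hom_int_pow pi_a pi_b pi_c int_pow_Z3 mult_Z3)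
    then show "z \<in> piZ ` carrier G0" using x z by (metis image_eqI)
  qed
qed



lemma derived_sub_kernel: "derived G0 (carrier G0) \<subseteq> kernel G0 Z3 piZ"
proof -
  interpret h: group_hom G0 Z3 piZ by (rule group_hom_pi)
  have "derived_set G0 (carrier G0) \<subseteq> kernel G0 Z3 piZ"
  proof
    fix x assume "x \<in> derived_set G0 (carrier G0)"
    then obtain h1 h2 where h: "h1 \<in> carrier G0" "h2 \<in> carrier G0"
      and x: "x = h1 \<otimes>\<^bsub>G0\<^esub> h2 \<otimes>\<^bsub>G0\<^esub> inv\<^bsub>G0\<^esub> h1 \<otimes>\<^bsub>G0\<^esub> inv\<^bsub>G0\<^esub> h2" by blast
    obtain p1 q1 r1 where 1: "piZ h1 = (p1, q1, r1)" by (cases "piZ h1") auto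
    obtain p2 q2 r2 where 2: "piZ h2 = (p2, q2, r2)" by (cases "piZ h2") auto
    have "x \<in> carrier G0" using h x by simp
    moreover have "piZ x = \<one>\<^bsub>Z3\<^esub>"
      using h unfolding x by (simp add: 1 2 mult_Z3 inv_Z3 one_Z3)
    ultimately show "x \<in> kernel G0 Z3 piZ" by (simp add: kernel_def)
  qed
  then show ?thesis unfolding derived_def
    by (rule group.generate_subgroup_incl[OF group_G0 _ h.subgroup_kernel])
qed

lemma kernel_sub_derived: "kernel G0 Z3 piZ \<subseteq> derived G0 (carrier G0)"
proof -
  interpret G: group G0 by (rule group_G0)
  interpret h: group_hom G0 Z3 piZ by (rule group_hom_pi)
  define D where "D = derived G0 (carrier G0)"
  have N: "D \<lhd> G0" unfolding D_def by (rule G.derived_self_is_normal)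
  interpret Q: comm_group "G0 Mod D" unfolding D_def by (rule G.derived_quot_is_comm_group)
  interpret nu: group_hom G0 "G0 Mod D" "\<lambda>g. D #>\<^bsub>G0\<^esub> g"
    by (simp add: group_hom_def group_hom_axioms_def G.group_axioms Q.group_axioms
        normal.r_coset_hom_Mod[OF N])
  define A where "A = D #>\<^bsub>G0\<^esub> gen_a"
  define B where "B = D #>\<^bsub>G0\<^esub> gen_b"
  define C where "C = D #>\<^bsub>G0\<^esub> gen_c"
  have ABC: "A \<in> carrier (G0 Mod D)" "B \<in> carrier (G0 Mod D)" "C \<in> carrier (G0 Mod D)"
    unfolding A_def B_def C_def using gens_G0 by simp_all
  define W where "W p = A [^]\<^bsub>G0 Mod D\<^esub> (fst p) \<otimes>\<^bsub>G0 Mod D\<^esub> B [^]\<^bsub>G0 Mod D\<^esub> (fst (snd p))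
      \<otimes>\<^bsub>G0 Mod D\<^esub> C [^]\<^bsub>G0 Mod D\<^esub> (snd (snd p))" for p :: "int \<times> int \<times> int"
  have Wc: "W p \<in> carrier (G0 Mod D)" for p unfolding W_def using ABC by (intro Q.m_closed Q.int_pow_closed)
  have W_add: "W (p \<otimes>\<^bsub>Z3\<^esub> p') = W p \<otimes>\<^bsub>G0 Mod D\<^esub> W p'" for p p'
  proof -
    obtain i j k where p: "p = (i, j, k)" by (cases p) auto
    obtain i' j' k' where p': "p' = (i', j', k')" by (cases p') auto
    show ?thesis unfolding p p' mult_Z3 W_def using ABC
      by (simp add: Q.int_pow_mult Q.m_ac del: mult_FactGroup one_FactGroup)
  qed
  have W0: "W (0, 0, 0) = \<one>\<^bsub>G0 Mod D\<^esub>" unfolding W_def using ABC by (simp del: mult_FactGroup one_FactGroup)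
  have W_inv: "W (inv\<^bsub>Z3\<^esub> p) = inv\<^bsub>G0 Mod D\<^esub> W p" for p
  proof -
    obtain i j k where p: "p = (i, j, k)" by (cases p) auto
    have "W (inv\<^bsub>Z3\<^esub> p) \<otimes>\<^bsub>G0 Mod D\<^esub> W p = W (inv\<^bsub>Z3\<^esub> p \<otimes>\<^bsub>Z3\<^esub> p)" by (rule W_add[symmetric])
    also have "\<dots> = \<one>\<^bsub>G0 Mod D\<^esub>" unfolding p inv_Z3 mult_Z3 by (simp add: W0)
    finally show ?thesis by (intro Q.inv_equality[symmetric] Wc)
  qed
  have W_a: "W (1, 0, 0) = A" "W (0, 1, 0) = B" "W (0, 0, 1) = C" unfolding W_def using ABC by (simp_all del: mult_FactGroup one_FactGroup)
  have main: "D #>\<^bsub>G0\<^esub> g = W (piZ g)" if "g \<in> carrier G0" for g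
    using that unfolding carrier_G0'
  proof (induction rule: generate.induct)
    case one then show ?case using h.hom_one nu.hom_one by (simp add: one_Z3 W0)
  next
    case (incl g) then show ?case using W_a by (auto simp: pi_a pi_b pi_c A_def B_def C_def)
  next
    case (inv g)
    then have g: "g \<in> carrier G0" using gens_G0 by auto
    have "D #>\<^bsub>G0\<^esub> g = W (piZ g)"
      using inv.hyps W_a by (auto simp: pi_a pi_b pi_c A_def B_def C_def)
    then show ?case using g by (simp add: W_inv)
  next
    case (eng g1 g2)
    then have g: "g1 \<in> carrier G0" "g2 \<in> carrier G0" by (simp_all add: carrier_G0'[symmetric])
    then show ?case using eng.IH by (simp add: W_add)
  qed
  show ?thesis
  proof
    fix g assume "g \<in> kernel G0 Z3 piZ"
    then have g: "g \<in> carrier G0" "piZ g = (0, 0, 0)" by (simp_all add: kernel_def one_Z3)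
    have "D #>\<^bsub>G0\<^esub> g = D" using main[OF g(1)] g(2) W0 by simp
    moreover have "g \<in> D #>\<^bsub>G0\<^esub> g"
      by (rule G.rcos_self[OF g(1) normal_imp_subgroup[OF N]])
    ultimately show "g \<in> derived G0 (carrier G0)" unfolding D_def by simp
  qed
qed

theorem mainTheorem3:
  shows "\<exists>\<pi>. \<pi> \<in> hom G0 Z3
              \<and> \<pi> gen_a = (1, 0, 0) \<and> \<pi> gen_b = (0, 1, 0) \<and> \<pi> gen_c = (0, 0, 1)
              \<and> \<pi> ` carrier G0 = carrier Z3
              \<and> kernel G0 Z3 \<pi> = derived G0 (carrier G0)"
  using pi_hom pi_a pi_b pi_c pi_surj derived_sub_kernel kernel_sub_derived by blast

end
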